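(* Let $n\ge 2$ and let $b\in B_n$ be a half-twist with $\pi(b)=(1,n)$. Then $b^2\in A_n$, and there exists $P\in A_n$ such that $b^2=P^{-1}a_{n-1}P$.
   Context: $B_n$ is Artin's braid group with generators $\sigma_1,\dots,\sigma_{n-1}$; $\pi:B_n\to S_n$ is the homomorphism with $\pi(\sigma_i)=(i,i+1)$. A half-twist is an element of the conjugacy class of $\sigma_1$ in $B_n$. For $1\le i\le n-1$ let $a_i=\sigma_1\cdots\sigma_{i-1}\sigma_i^2\sigma_{i-1}^{-1}\cdots\sigma_1^{-1}$, and let $A_n$ be the subgroup of $B_n$ generated by $a_1,\dots,a_{n-1}$ (the "combed braids": braids representable with strings $2,\dots,n$ straight and parallel and only string 1 moving among them); $A_n$ is a free group on $a_1,\dots,a_{n-1}$. *)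

theory Defs
  imports Main "HOL-Combinatorics.Transposition"
begin

text \<open>An element of B_n is
represented by a word in the letters sigma_i^{+1} / sigma_i^{-1}; a letter is a pair
(i, s) where s = True means sigma_i and s = False means sigma_i^{-1}.
Two words represent the same braid iff they are related by braid_eq n, the
congruence generated by free cancellation and the braid relations.\<close>

type_synonym bletter = "nat \<times> bool"
type_synonym bword = "bletter list"

definition valid_word :: "nat \<Rightarrow> bword \<Rightarrow> bool" where
  "valid_word n w \<longleftrightarrow> (\<forall>(i, s) \<in> set w. 1 \<le> i \<and> i < n)"

definition inv_word :: "bword \<Rightarrow> bword" where
  "inv_word w = rev (map (\<lambda>(i, s). (i, \<not> s)) w)"

inductive braid_rel :: "nat \<Rightarrow> bword \<Rightarrow> bword \<Rightarrow> bool" for n where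
  cancel: "1 \<le> i \<Longrightarrow> i < n \<Longrightarrow> braid_rel n [(i, s), (i, \<not> s)] []"
| far_comm: "1 \<le> i \<Longrightarrow> i + 1 < j \<Longrightarrow> j < n \<Longrightarrow>
     braid_rel n [(i, True), (j, True)] [(j, True), (i, True)]"
| braid: "1 \<le> i \<Longrightarrow> i + 1 < n \<Longrightarrow>
     braid_rel n [(i, True), (i+1, True), (i, True)] [(i+1, True), (i, True), (i+1, True)]"

inductive braid_eq :: "nat \<Rightarrow> bword \<Rightarrow> bword \<Rightarrow> bool" for n where
  refl: "braid_eq n w w"
| sym: "braid_eq n u v \<Longrightarrow> braid_eq n v u"
| trans: "braid_eq n u v \<Longrightarrow> braid_eq n v w \<Longrightarrow> braid_eq n u w"
| ctx: "braid_rel n l r \<Longrightarrow> braid_eq n (u @ l @ v) (u @ r @ v)"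

fun perm_of :: "bword \<Rightarrow> nat \<Rightarrow> nat" where
  "perm_of [] = id"
| "perm_of ((i, s) # w) = transpose i (i + 1) \<circ> perm_of w"

definition half_twist :: "nat \<Rightarrow> bword \<Rightarrow> bool" where
  "half_twist n b \<longleftrightarrow> valid_word n b \<and>
     (\<exists>u. valid_word n u \<and> braid_eq n b (u @ [(1, True)] @ inv_word u))"

definition a_word :: "nat \<Rightarrow> bword" where
  "a_word i = map (\<lambda>j. (j, True)) [1..<i] @ [(i, True), (i, True)]
              @ inv_word (map (\<lambda>j. (j, True)) [1..<i])"

fun a_letter :: "nat \<times> bool \<Rightarrow> bword" where
  "a_letter (i, True) = a_word i"
| "a_letter (i, False) = inv_word (a_word i)"

definition in_A :: "nat \<Rightarrow> bword \<Rightarrow> bool" where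
  "in_A n w \<longleftrightarrow> (\<exists>ls. (\<forall>(i, s) \<in> set ls. 1 \<le> i \<and> i < n)
                       \<and> braid_eq n w (concat (map a_letter ls)))"

end

theory Submission
  imports Defs
begin

declare braid_eq.trans[trans]

lemma be_sym: "braid_eq n u v \<Longrightarrow> braid_eq n v u" by (rule braid_eq.sym)

lemma be_ctx: "braid_eq n l r \<Longrightarrow> braid_eq n (u @ l @ v) (u @ r @ v)"
proof (induction arbitrary: u v rule: braid_eq.induct)
  case (refl w) then show ?case by (rule braid_eq.refl)
next
  case (sym a b) then show ?case by (blast intro: braid_eq.sym)
next
  case (trans a b c) then show ?case by (blast intro: braid_eq.trans)
next
  case (ctx l r u' v')
  have "braid_eq n ((u @ u') @ l @ (v' @ v)) ((u @ u') @ r @ (v' @ v))"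
    using ctx by (rule braid_eq.ctx)
  then show ?case by simp
qed

lemma be_app: "braid_eq n a b \<Longrightarrow> braid_eq n c d \<Longrightarrow> braid_eq n (a @ c) (b @ d)"
proof -
  assume "braid_eq n a b" "braid_eq n c d"
  have "braid_eq n ([] @ a @ c) ([] @ b @ c)" using be_ctx[OF \<open>braid_eq n a b\<close>] by blast
  moreover have "braid_eq n (b @ c @ []) (b @ d @ [])" using be_ctx[OF \<open>braid_eq n c d\<close>] by blast
  ultimately show ?thesis by (auto intro: braid_eq.trans)
qed

lemma be_left: "braid_eq n l r \<Longrightarrow> braid_eq n (u @ l) (u @ r)"
  using be_ctx[of n l r u "[]"] by simp
lemma be_right: "braid_eq n l r \<Longrightarrow> braid_eq n (l @ v) (r @ v)"
  using be_ctx[of n l r "[]" v] by simp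

lemma valid_append[simp]: "valid_word n (u @ v) \<longleftrightarrow> valid_word n u \<and> valid_word n v"
  by (auto simp: valid_word_def)
lemma valid_Cons[simp]: "valid_word n (x # v) \<longleftrightarrow> (1 \<le> fst x \<and> fst x < n) \<and> valid_word n v"
  by (cases x) (auto simp: valid_word_def)
lemma valid_Nil[simp]: "valid_word n []" by (simp add: valid_word_def)

lemma inv_word_Nil[simp]: "inv_word [] = []" by (simp add: inv_word_def)
lemma inv_word_Cons[simp]: "inv_word (x # w) = inv_word w @ [(fst x, \<not> snd x)]"
  by (cases x) (simp add: inv_word_def)
lemma inv_word_append[simp]: "inv_word (u @ v) = inv_word v @ inv_word u"
  by (simp add: inv_word_def)
lemma inv_inv[simp]: "inv_word (inv_word w) = w"
  by (induction w) (auto simp: inv_word_def)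
lemma valid_inv[simp]: "valid_word n (inv_word w) \<longleftrightarrow> valid_word n w"
  by (induction w) auto

lemma cancel_letter: "1 \<le> i \<Longrightarrow> i < n \<Longrightarrow> braid_eq n (u @ (i, s) # (i, \<not> s) # v) (u @ v)"
  using braid_eq.ctx[OF braid_rel.cancel[of i n s], of u v] by simp

lemma cancel_word: "valid_word n w \<Longrightarrow> braid_eq n (u @ w @ inv_word w @ v) (u @ v)"
proof (induction w arbitrary: u v)
  case Nil then show ?case by (simp add: braid_eq.refl)
next
  case (Cons x w)
  obtain i s where x: "x = (i, s)" by (cases x)
  have "u @ (x # w) @ inv_word (x # w) @ v = (u @ [(i,s)]) @ w @ inv_word w @ ((i, \<not> s) # v)"
    by (simp add: x)
  also have "braid_eq n ... ((u @ [(i,s)]) @ ((i, \<not> s) # v))"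
    using Cons.IH[of "u @ [(i,s)]"] Cons.prems by simp
  also have "... = u @ (i,s) # (i, \<not>s) # v" by simp
  also have "braid_eq n ... (u @ v)" using Cons x by (auto intro: cancel_letter)
  finally show ?case .
qed

lemma cancel_word': "valid_word n w \<Longrightarrow> braid_eq n (u @ inv_word w @ w @ v) (u @ v)"
  using cancel_word[of n "inv_word w" u v] by simp

lemma rel_valid: "braid_rel n l r \<Longrightarrow> valid_word n l \<and> valid_word n r"
  by (induction rule: braid_rel.induct) auto

lemma rel_inv: "braid_rel n l r \<Longrightarrow> braid_eq n (inv_word l) (inv_word r)"
proof -
  assume R: "braid_rel n l r"
  then have vl: "valid_word n l" and vr: "valid_word n r" using rel_valid by auto
  have "inv_word l = inv_word l @ [] @ []" by simp
  also have "braid_eq n ... (inv_word l @ r @ inv_word r)"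
    using be_sym[OF cancel_word[OF vr, of "inv_word l" "[]"]] by simp
  also have "braid_eq n ... (inv_word l @ l @ inv_word r)"
    using be_ctx[OF braid_eq.sym[OF braid_eq.ctx[OF R, of "[]" "[]"]], of "inv_word l" "inv_word r"] by simp
  also have "braid_eq n ... ([] @ inv_word r)"
    using cancel_word'[OF vl, of "[]" "inv_word r"] by simp
  finally show ?thesis by simp
qed

lemma be_inv: "braid_eq n u v \<Longrightarrow> braid_eq n (inv_word u) (inv_word v)"
proof (induction rule: braid_eq.induct)
  case (refl w) then show ?case by (rule braid_eq.refl)
next
  case (sym a b) then show ?case by (blast intro: braid_eq.sym)
next
  case (trans a b c) then show ?case by (blast intro: braid_eq.trans)
next
  case (ctx l r u v)
  show ?case using be_ctx[OF rel_inv[OF ctx], of "inv_word v" "inv_word u"] by simp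
qed



subsection \<open>Permutations\<close>

lemma perm_append[simp]: "perm_of (u @ v) = perm_of u \<circ> perm_of v"
  by (induction u rule: perm_of.induct) auto

lemma perm_inv_left: "perm_of (inv_word w) \<circ> perm_of w = id"
proof (induction w)
  case Nil then show ?case by simp
next
  case (Cons x w)
  obtain i s where x: "x = (i,s)" by (cases x)
  show ?case using Cons by (simp add: x fun_eq_iff)
qed

lemma perm_inv_right: "perm_of w \<circ> perm_of (inv_word w) = id"
  using perm_inv_left[of "inv_word w"] by simp

lemma perm_rel: "braid_rel n l r \<Longrightarrow> perm_of l = perm_of r"
proof (induction rule: braid_rel.induct)
  case (cancel i s) then show ?case by simp
next
  case (far_comm i j)
  then show ?case by (auto simp: fun_eq_iff transpose_def)
next
  case (braid i)
  then show ?case by (auto simp: fun_eq_iff transpose_def)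
qed

lemma perm_be: "braid_eq n u v \<Longrightarrow> perm_of u = perm_of v"
  by (induction rule: braid_eq.induct) (auto dest: perm_rel)

lemma perm_range: "valid_word n w \<Longrightarrow> 1 \<le> k \<Longrightarrow> k \<le> n \<Longrightarrow> 1 \<le> perm_of w k \<and> perm_of w k \<le> n"
proof (induction w)
  case Nil then show ?case by simp
next
  case (Cons x w)
  obtain i s where x: "x = (i,s)" by (cases x)
  show ?case using Cons x by (auto simp: transpose_def)
qed

lemma intertwine1:
  assumes "valid_word n a" "valid_word n b" "valid_word n w" "braid_eq n (a @ w) (w @ b)"
  shows "braid_eq n (b @ inv_word w) (inv_word w @ a)"
proof -
  have "braid_eq n (b @ inv_word w) (inv_word w @ w @ b @ inv_word w)"
    using be_sym[OF cancel_word'[OF assms(3), of "[]" "b @ inv_word w"]] by simp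
  also have "braid_eq n ... (inv_word w @ a @ w @ inv_word w)"
    using be_ctx[OF be_sym[OF assms(4)], of "inv_word w" "inv_word w"] by simp
  also have "braid_eq n ... (inv_word w @ a)"
    using cancel_word[OF assms(3), of "inv_word w @ a" "[]"] by simp
  finally show ?thesis .
qed

lemma intertwine2:
  assumes "valid_word n a" "valid_word n b" "valid_word n w" "braid_eq n (a @ w) (w @ b)"
  shows "braid_eq n (inv_word a @ w) (w @ inv_word b)"
proof -
  have "braid_eq n (inv_word a @ w) (inv_word a @ w @ b @ inv_word b)"
    using be_sym[OF cancel_word[OF assms(2), of "inv_word a @ w" "[]"]] by simp
  also have "braid_eq n ... (inv_word a @ a @ w @ inv_word b)"
    using be_ctx[OF be_sym[OF assms(4)], of "inv_word a" "inv_word b"] by simp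
  also have "braid_eq n ... (w @ inv_word b)"
    using cancel_word'[OF assms(1), of "[]" "w @ inv_word b"] by simp
  finally show ?thesis .
qed


lemma conj_from_intertwine:
  assumes "valid_word n b" "braid_eq n (a @ w) (w @ b)"
  shows "braid_eq n (a @ w @ inv_word b) w"
proof -
  have "braid_eq n (a @ w @ inv_word b) (w @ b @ inv_word b)"
    using be_right[OF assms(2), of "inv_word b"] by simp
  also have "braid_eq n ... w" using cancel_word[OF assms(1), of w "[]"] by simp
  finally show ?thesis .
qed

subsection \<open>Far commutation\<close>

lemma far_TT: "1 \<le> i \<Longrightarrow> i + 1 < j \<Longrightarrow> j < n \<Longrightarrow> braid_eq n [(i,True),(j,True)] [(j,True),(i,True)]"
  using braid_eq.ctx[OF braid_rel.far_comm, of i j n "[]" "[]"] by simp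

lemma far:
  assumes "1 \<le> i" "i + 1 < j" "j < n"
  shows "braid_eq n [(i,s),(j,t)] [(j,t),(i,s)]"
proof -
  have v: "valid_word n [(i,True)]" "valid_word n [(j,True)]" using assms by auto
  have TT: "braid_eq n ([(i,True)] @ [(j,True)]) ([(j,True)] @ [(i,True)])"
    using far_TT[OF assms] by simp
  have FT: "braid_eq n ([(i,False)] @ [(j,True)]) ([(j,True)] @ [(i,False)])"
    using intertwine2[OF v(1) v(1) v(2) TT] by simp
  have TF: "braid_eq n ([(i,True)] @ [(j,False)]) ([(j,False)] @ [(i,True)])"
    using intertwine1[OF v(1) v(1) v(2) TT] by simp
  have FF: "braid_eq n ([(i,False)] @ [(j,False)]) ([(j,False)] @ [(i,False)])"
    using be_sym[OF be_inv[OF TT]] by simp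
  show ?thesis using TT FT TF FF by (cases s; cases t) simp_all
qed

lemma far': "1 \<le> i \<Longrightarrow> i + 1 < j \<Longrightarrow> j < n \<Longrightarrow> braid_eq n [(j,t),(i,s)] [(i,s),(j,t)]"
  using be_sym[OF far] by blast

subsection \<open>The words X m = s_1 ... s_(m-1)\<close>

definition xw :: "nat \<Rightarrow> bword" where
  "xw m = map (\<lambda>j. (j, True)) [1..<m]"

lemma xw_0[simp]: "xw 0 = []" and xw_1[simp]: "xw (Suc 0) = []" by (simp_all add: xw_def)
lemma xw_Suc: "1 \<le> m \<Longrightarrow> xw (Suc m) = xw m @ [(m, True)]" by (simp add: xw_def)
lemma valid_xw: "m \<le> n \<Longrightarrow> valid_word n (xw m)" by (auto simp: xw_def valid_word_def)

lemma a_word_xw: "a_word i = xw i @ [(i,True),(i,True)] @ inv_word (xw i)"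
  by (simp add: a_word_def xw_def)

lemma xw_comm: "m < j \<Longrightarrow> j < n \<Longrightarrow> braid_eq n ((j,s) # xw m) (xw m @ [(j,s)])"
proof (induction m)
  case 0 then show ?case by (simp add: braid_eq.refl)
next
  case (Suc m)
  show ?case
  proof (cases "m = 0")
    case True then show ?thesis by (simp add: braid_eq.refl)
  next
    case False
    have "(j,s) # xw (Suc m) = [(j,s)] @ xw m @ [(m,True)]" using False by (simp add: xw_Suc)
    also have "braid_eq n ... (xw m @ [(j,s)] @ [(m,True)])"
      using be_right[OF Suc.IH, of "[(m,True)]"] Suc.prems by simp
    also have "... = xw m @ [(j,s),(m,True)] @ []" by simp
    also have "braid_eq n ... (xw m @ [(m,True),(j,s)] @ [])"
      using be_ctx[OF far'[of m j n s True], of "xw m" "[]"] Suc.prems False by simp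
    also have "... = xw (Suc m) @ [(j,s)]" using False by (simp add: xw_Suc)
    finally show ?thesis .
  qed
qed

lemma xw_shift_aux:
  assumes "1 \<le> i" "i + 2 + d \<le> n"
  shows "braid_eq n ((i+1,True) # xw (i+2+d)) (xw (i+2+d) @ [(i,True)])"
  using assms(2)
proof (induction d)
  case 0
  have "(i+1,True) # xw (i+2+0) = [(i+1,True)] @ xw i @ [(i,True),(i+1,True)]"
    using assms(1) by (simp add: xw_Suc)
  also have "braid_eq n ... (xw i @ [(i+1,True)] @ [(i,True),(i+1,True)])"
    using be_right[OF xw_comm[of i "i+1" n True]] 0 by simp
  also have "... = xw i @ [(i+1,True),(i,True),(i+1,True)] @ []" by simp
  also have "braid_eq n ... (xw i @ [(i,True),(i+1,True),(i,True)] @ [])"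
    using braid_eq.sym[OF braid_eq.ctx[OF braid_rel.braid[of i n]]] assms(1) 0 by simp
  also have "... = xw (i+2+0) @ [(i,True)]" using assms(1) by (simp add: xw_Suc)
  finally show ?case .
next
  case (Suc d)
  have "(i+1,True) # xw (i+2+Suc d) = ((i+1,True) # xw (i+2+d)) @ [(i+2+d,True)]"
    by (simp add: xw_Suc)
  also have "braid_eq n ... ((xw (i+2+d) @ [(i,True)]) @ [(i+2+d,True)])"
    using be_right[OF Suc.IH] Suc.prems by simp
  also have "... = xw (i+2+d) @ [(i,True),(i+2+d,True)] @ []" by simp
  also have "braid_eq n ... (xw (i+2+d) @ [(i+2+d,True),(i,True)] @ [])"
    using be_ctx[OF far[of i "i+2+d" n True True]] assms(1) Suc.prems by simp
  also have "... = xw (i+2+Suc d) @ [(i,True)]" by (simp add: xw_Suc)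
  finally show ?case .
qed

lemma xw_shift:
  assumes "1 \<le> i" "i + 2 \<le> m" "m \<le> n"
  shows "braid_eq n ([(i+1,True)] @ xw m) (xw m @ [(i,True)])"
proof -
  obtain d where m: "m = i + 2 + d" using assms(2) le_Suc_ex by blast
  show ?thesis using xw_shift_aux[OF assms(1), of d n] assms m by simp
qed

lemma xw_shift_s:
  assumes "1 \<le> i" "i + 2 \<le> m" "m \<le> n"
  shows "braid_eq n ([(i+1,s)] @ xw m) (xw m @ [(i,s)])"
proof (cases s)
  case True then show ?thesis using xw_shift[OF assms] by simp
next
  case False
  have v: "valid_word n [(i+1,True)]" "valid_word n [(i,True)]" "valid_word n (xw m)"
    using assms valid_xw by auto
  show ?thesis using intertwine2[OF v xw_shift[OF assms]] False by simp
qed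



definition Aw :: "bword \<Rightarrow> bword" where
  "Aw ls = concat (map a_letter ls)"

lemma Aw_Nil[simp]: "Aw [] = []" by (simp add: Aw_def)
lemma Aw_Cons: "Aw (x # ls) = a_letter x @ Aw ls" by (simp add: Aw_def)
lemma Aw_append[simp]: "Aw (u @ v) = Aw u @ Aw v" by (simp add: Aw_def)
lemma Aw_single_T[simp]: "Aw [(i,True)] = a_word i" by (simp add: Aw_def)
lemma Aw_single_F[simp]: "Aw [(i,False)] = inv_word (a_word i)" by (simp add: Aw_def)

lemma inv_a_letter: "inv_word (a_letter x) = a_letter (fst x, \<not> snd x)"
  by (cases x; cases "snd x") auto

lemma Aw_inv: "inv_word (Aw ls) = Aw (inv_word ls)"
  by (induction ls) (auto simp: Aw_Cons inv_a_letter Aw_def)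

lemma valid_a_word: "1 \<le> i \<Longrightarrow> i < n \<Longrightarrow> valid_word n (a_word i)"
  by (auto simp: a_word_xw valid_xw)

lemma valid_Aw: "valid_word n ls \<Longrightarrow> valid_word n (Aw ls)"
proof (induction ls)
  case Nil then show ?case by simp
next
  case (Cons x ls)
  obtain i s where x: "x = (i,s)" by (cases x)
  show ?case using Cons x valid_a_word[of i n] by (cases s) (auto simp: Aw_Cons)
qed

lemma perm_a_word[simp]: "perm_of (a_word i) = id"
proof -
  have "perm_of (a_word i) = perm_of (xw i) \<circ> perm_of (inv_word (xw i))"
    by (simp add: a_word_xw fun_eq_iff)
  then show ?thesis using perm_inv_right by simp
qed

lemma perm_inv_id: "perm_of w = id \<Longrightarrow> perm_of (inv_word w) = id"
  using perm_inv_left[of w] by simp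

lemma perm_Aw[simp]: "perm_of (Aw ls) = id"
proof (induction ls)
  case Nil then show ?case by simp
next
  case (Cons x ls)
  obtain i s where x: "x = (i,s)" by (cases x)
  show ?case using Cons x perm_inv_id[OF perm_a_word[of i]] by (cases s) (auto simp: Aw_Cons)
qed

lemma insert_word: "valid_word n h \<Longrightarrow> braid_eq n (u @ v) (u @ h @ inv_word h @ v)"
  using be_sym[OF cancel_word] by blast
lemma insert_word': "valid_word n h \<Longrightarrow> braid_eq n (u @ v) (u @ inv_word h @ h @ v)"
  using be_sym[OF cancel_word'] by blast

definition Nh :: "nat \<Rightarrow> bword \<Rightarrow> bool" where
  "Nh n h \<longleftrightarrow> valid_word n h \<and>
     (\<forall>k. 2 \<le> k \<and> k \<le> n \<longrightarrow> 2 \<le> perm_of h k \<and> perm_of h k \<le> n \<and>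
        (\<exists>m. valid_word n m \<and>
           braid_eq n (h @ a_word (k - 1) @ inv_word h)
                      (inv_word (Aw m) @ a_word (perm_of h k - 1) @ Aw m)))"

lemma NhI:
  assumes "valid_word n h"
    and "\<And>k. 2 \<le> k \<Longrightarrow> k \<le> n \<Longrightarrow> 2 \<le> perm_of h k \<and> perm_of h k \<le> n \<and>
        (\<exists>m. valid_word n m \<and>
           braid_eq n (h @ a_word (k - 1) @ inv_word h)
                      (inv_word (Aw m) @ a_word (perm_of h k - 1) @ Aw m))"
  shows "Nh n h"
  using assms unfolding Nh_def by blast

lemma NhD:
  assumes "Nh n h" "2 \<le> k" "k \<le> n"
  shows "2 \<le> perm_of h k" "perm_of h k \<le> n"
    "\<exists>m. valid_word n m \<and>
           braid_eq n (h @ a_word (k - 1) @ inv_word h)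
                      (inv_word (Aw m) @ a_word (perm_of h k - 1) @ Aw m)"
  using assms unfolding Nh_def by blast+

lemma Nh_valid: "Nh n h \<Longrightarrow> valid_word n h" by (simp add: Nh_def)

lemma conj_A_form:
  "inv_word (Aw m) @ a_word j @ Aw m = Aw (inv_word m @ [(j,True)] @ m)"
  by (simp add: Aw_inv Aw_Cons)

lemma Nh_conjA:
  assumes "Nh n h" "valid_word n ls"
  shows "\<exists>ls'. valid_word n ls' \<and> braid_eq n (h @ Aw ls @ inv_word h) (Aw ls')"
  using assms(2)
proof (induction ls)
  case Nil
  show ?case using cancel_word[OF Nh_valid[OF assms(1)], of "[]" "[]"]
    by (intro exI[of _ "[]"]) simp
next
  case (Cons x ls)
  obtain i s where x: "x = (i,s)" by (cases x)
  have i: "1 \<le> i" "i < n" using Cons.prems x by auto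
  have vh: "valid_word n h" using Nh_valid[OF assms(1)] .
  obtain ls' where ls': "valid_word n ls'" "braid_eq n (h @ Aw ls @ inv_word h) (Aw ls')"
    using Cons by auto
  define k where "k = i + 1"
  have k: "2 \<le> k" "k \<le> n" using i by (auto simp: k_def)
  obtain m where m: "valid_word n m"
    "braid_eq n (h @ a_word (k - 1) @ inv_word h) (inv_word (Aw m) @ a_word (perm_of h k - 1) @ Aw m)"
    using NhD(3)[OF assms(1) k] by blast
  define c where "c = inv_word m @ [(perm_of h k - 1, True)] @ m"
  have vc: "valid_word n c" using m(1) NhD(1,2)[OF assms(1) k] by (auto simp: c_def)
  have hc: "braid_eq n (h @ a_word i @ inv_word h) (Aw c)"
    using m(2) by (simp add: k_def c_def conj_A_form)
  obtain c' where c': "valid_word n c'" "braid_eq n (h @ a_letter x @ inv_word h) (Aw c')"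
  proof (cases s)
    case True
    then show ?thesis using that[of c] vc hc x by simp
  next
    case False
    have "braid_eq n (inv_word (h @ a_word i @ inv_word h)) (inv_word (Aw c))"
      using be_inv[OF hc] .
    then have "braid_eq n (h @ a_letter x @ inv_word h) (Aw (inv_word c))"
      using x False by (simp add: Aw_inv)
    then show ?thesis using that[of "inv_word c"] vc by simp
  qed
  have "h @ Aw (x # ls) @ inv_word h = (h @ a_letter x) @ Aw ls @ inv_word h"
    by (simp add: Aw_Cons)
  also have "braid_eq n ... ((h @ a_letter x) @ inv_word h @ h @ Aw ls @ inv_word h)"
    using insert_word'[OF vh] by blast
  also have "... = (h @ a_letter x @ inv_word h) @ (h @ Aw ls @ inv_word h)" by simp
  also have "braid_eq n ... (Aw c' @ Aw ls')" using be_app[OF c'(2) ls'(2)] .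
  also have "... = Aw (c' @ ls')" by simp
  finally show ?case using c'(1) ls'(1) by (intro exI[of _ "c' @ ls'"]) simp
qed

lemma Nh_mult:
  assumes "Nh n h1" "Nh n h2"
  shows "Nh n (h1 @ h2)"
proof (rule NhI)
  have v1: "valid_word n h1" and v2: "valid_word n h2" using assms Nh_valid by auto
  then show "valid_word n (h1 @ h2)" by simp
  fix k assume k: "2 \<le> k" "k \<le> n"
  define k2 where "k2 = perm_of h2 k"
  have k2: "2 \<le> k2" "k2 \<le> n" using NhD(1,2)[OF assms(2) k] by (auto simp: k2_def)
  obtain m2 where m2: "valid_word n m2"
    "braid_eq n (h2 @ a_word (k - 1) @ inv_word h2) (inv_word (Aw m2) @ a_word (k2 - 1) @ Aw m2)"
    using NhD(3)[OF assms(2) k] k2_def by blast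
  obtain m1 where m1: "valid_word n m1"
    "braid_eq n (h1 @ a_word (k2 - 1) @ inv_word h1) (inv_word (Aw m1) @ a_word (perm_of h1 k2 - 1) @ Aw m1)"
    using NhD(3)[OF assms(1) k2] by blast
  obtain m' where m': "valid_word n m'" "braid_eq n (h1 @ Aw m2 @ inv_word h1) (Aw m')"
    using Nh_conjA[OF assms(1) m2(1)] by blast
  have m'i: "braid_eq n (h1 @ inv_word (Aw m2) @ inv_word h1) (inv_word (Aw m'))"
    using be_inv[OF m'(2)] by simp
  have "(h1 @ h2) @ a_word (k - 1) @ inv_word (h1 @ h2)
      = h1 @ (h2 @ a_word (k - 1) @ inv_word h2) @ inv_word h1" by simp
  also have "braid_eq n ... (h1 @ (inv_word (Aw m2) @ a_word (k2 - 1) @ Aw m2) @ inv_word h1)"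
    using be_ctx[OF m2(2)] .
  also have "... = (h1 @ inv_word (Aw m2)) @ (a_word (k2 - 1) @ Aw m2 @ inv_word h1)" by simp
  also have "braid_eq n ... ((h1 @ inv_word (Aw m2)) @ inv_word h1 @ h1 @ (a_word (k2 - 1) @ Aw m2 @ inv_word h1))"
    using insert_word'[OF v1] by blast
  also have "... = (h1 @ inv_word (Aw m2) @ inv_word h1 @ h1 @ a_word (k2 - 1)) @ (Aw m2 @ inv_word h1)" by simp
  also have "braid_eq n ... ((h1 @ inv_word (Aw m2) @ inv_word h1 @ h1 @ a_word (k2 - 1)) @ inv_word h1 @ h1 @ (Aw m2 @ inv_word h1))"
    using insert_word'[OF v1] by blast
  also have "... = (h1 @ inv_word (Aw m2) @ inv_word h1) @ (h1 @ a_word (k2 - 1) @ inv_word h1) @ (h1 @ Aw m2 @ inv_word h1)"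
    by simp
  also have "braid_eq n ... (inv_word (Aw m') @ (inv_word (Aw m1) @ a_word (perm_of h1 k2 - 1) @ Aw m1) @ Aw m')"
    using be_app[OF m'i be_app[OF m1(2) m'(2)]] .
  also have "... = inv_word (Aw (m1 @ m')) @ a_word (perm_of (h1 @ h2) k - 1) @ Aw (m1 @ m')"
    by (simp add: k2_def)
  finally have fin: "braid_eq n ((h1 @ h2) @ a_word (k - 1) @ inv_word (h1 @ h2))
      (inv_word (Aw (m1 @ m')) @ a_word (perm_of (h1 @ h2) k - 1) @ Aw (m1 @ m'))" .
  show "2 \<le> perm_of (h1 @ h2) k \<and> perm_of (h1 @ h2) k \<le> n \<and>
        (\<exists>m. valid_word n m \<and>
           braid_eq n ((h1 @ h2) @ a_word (k - 1) @ inv_word (h1 @ h2))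
                      (inv_word (Aw m) @ a_word (perm_of (h1 @ h2) k - 1) @ Aw m))"
  proof -
    have "valid_word n (m1 @ m')" using m1(1) m'(1) by simp
    moreover have pk: "perm_of (h1 @ h2) k = perm_of h1 k2" by (simp add: k2_def)
    ultimately show ?thesis using NhD(1,2)[OF assms(1) k2] fin unfolding pk by blast
  qed
qed

lemma Nh_transfer:
  assumes "Nh n h" "braid_eq n h h'" "valid_word n h'"
  shows "Nh n h'"
proof (rule NhI[OF assms(3)])
  fix k assume k: "2 \<le> k" "k \<le> n"
  have p: "perm_of h' = perm_of h" using perm_be[OF assms(2)] by simp
  have e: "braid_eq n (h' @ a_word (k - 1) @ inv_word h') (h @ a_word (k - 1) @ inv_word h)"
    using be_app[OF be_sym[OF assms(2)] be_app[OF braid_eq.refl be_inv[OF be_sym[OF assms(2)]]]] .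
  show "2 \<le> perm_of h' k \<and> perm_of h' k \<le> n \<and>
        (\<exists>m. valid_word n m \<and>
           braid_eq n (h' @ a_word (k - 1) @ inv_word h')
                      (inv_word (Aw m) @ a_word (perm_of h' k - 1) @ Aw m))"
    using NhD[OF assms(1) k] e p by (auto intro: braid_eq.trans)
qed

lemma Nh_A:
  assumes "valid_word n ls"
  shows "Nh n (Aw ls)"
proof (rule NhI)
  show "valid_word n (Aw ls)" using valid_Aw[OF assms] .
  fix k assume k: "2 \<le> k" "k \<le> n"
  have "Aw ls @ a_word (k - 1) @ inv_word (Aw ls)
      = inv_word (Aw (inv_word ls)) @ a_word (perm_of (Aw ls) k - 1) @ Aw (inv_word ls)"
    by (simp add: Aw_inv)
  then show "2 \<le> perm_of (Aw ls) k \<and> perm_of (Aw ls) k \<le> n \<and>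
        (\<exists>m. valid_word n m \<and>
           braid_eq n (Aw ls @ a_word (k - 1) @ inv_word (Aw ls))
                      (inv_word (Aw m) @ a_word (perm_of (Aw ls) k - 1) @ Aw m))"
    using k assms by (auto intro!: exI[of _ "inv_word ls"] braid_eq.refl)
qed

lemma Nh_Nil: "Nh n []" using Nh_A[of n "[]"] by simp
lemma Nh_a: "1 \<le> i \<Longrightarrow> i < n \<Longrightarrow> Nh n (a_word i)"
  using Nh_A[of n "[(i,True)]"] by simp
lemma Nh_a_inv: "1 \<le> i \<Longrightarrow> i < n \<Longrightarrow> Nh n (inv_word (a_word i))"
  using Nh_A[of n "[(i,False)]"] by simp



lemma rw: "braid_eq n l r \<Longrightarrow> X = u @ l @ v \<Longrightarrow> Y = u @ r @ v \<Longrightarrow> braid_eq n X Y"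
  using be_ctx by blast

lemma ins_letter: "1 \<le> i \<Longrightarrow> i < n \<Longrightarrow> braid_eq n (u @ v) (u @ (i, s) # (i, \<not> s) # v)"
  using be_sym[OF cancel_letter] by blast

lemma be_eq: "X = Y \<Longrightarrow> braid_eq n X Y" by (simp add: braid_eq.refl)

lemma BR: "1 \<le> i \<Longrightarrow> i + 1 < n \<Longrightarrow>
   braid_eq n [(i,True),(i+1,True),(i,True)] [(i+1,True),(i,True),(i+1,True)]"
  using braid_eq.ctx[OF braid_rel.braid[of i n], of "[]" "[]"] by simp

lemma BR': "1 \<le> i \<Longrightarrow> i + 1 < n \<Longrightarrow>
   braid_eq n [(i+1,True),(i,True),(i+1,True)] [(i,True),(i+1,True),(i,True)]"
  using be_sym[OF BR] by blast

context
  fixes n i :: nat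
  assumes i1: "1 \<le> i" and i2: "i + 1 < n"
begin

lemma B1: "braid_eq n [(i+1,True),(i,True),(i+1,False)] [(i,False),(i+1,True),(i,True)]"
proof -
  have "braid_eq n [(i,False),(i+1,True),(i,True)] [(i,False),(i+1,True),(i,True),(i+1,True),(i+1,False)]"
    using ins_letter[of "i+1" n "[(i,False),(i+1,True),(i,True)]" "[]" True] i1 i2 by simp
  also have "braid_eq n ... [(i,False),(i,True),(i+1,True),(i,True),(i+1,False)]"
    by (rule rw[OF BR'[OF i1 i2], of _ "[(i,False)]" "[(i+1,False)]"]) simp_all
  also have "braid_eq n ... [(i+1,True),(i,True),(i+1,False)]"
    using cancel_letter[of i n "[]" False "[(i+1,True),(i,True),(i+1,False)]"] i1 i2 by simp
  finally show ?thesis by (rule be_sym)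
qed

lemma B2: "braid_eq n [(i+1,False),(i,True),(i+1,True)] [(i,True),(i+1,True),(i,False)]"
proof -
  have "braid_eq n [(i,True),(i+1,True),(i,False)] [(i+1,False),(i+1,True),(i,True),(i+1,True),(i,False)]"
    using ins_letter[of "i+1" n "[]" _ False] i1 i2 by simp
  also have "braid_eq n ... [(i+1,False),(i,True),(i+1,True),(i,True),(i,False)]"
    by (rule rw[OF BR'[OF i1 i2], of _ "[(i+1,False)]" "[(i,False)]"]) simp_all
  also have "braid_eq n ... [(i+1,False),(i,True),(i+1,True)]"
    using cancel_letter[of i n "[(i+1,False),(i,True),(i+1,True)]" True "[]"] i1 i2 by simp
  finally show ?thesis by (rule be_sym)
qed

lemma E1: "braid_eq n [(i+1,True),(i,True),(i,True),(i+1,False)] [(i,False),(i+1,True),(i+1,True),(i,True)]"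
proof -
  have "braid_eq n [(i+1,True),(i,True),(i,True),(i+1,False)] [(i+1,True),(i,True),(i+1,False),(i+1,True),(i,True),(i+1,False)]"
    using ins_letter[of "i+1" n "[(i+1,True),(i,True)]" _ False] i1 i2 by simp
  also have "braid_eq n ... [(i,False),(i+1,True),(i,True),(i+1,True),(i,True),(i+1,False)]"
    by (rule rw[OF B1, of _ "[]"]) simp_all
  also have "braid_eq n ... [(i,False),(i+1,True),(i,True),(i,False),(i+1,True),(i,True)]"
    by (rule rw[OF B1, of _ "[(i,False),(i+1,True),(i,True)]" "[]"]) simp_all
  also have "braid_eq n ... [(i,False),(i+1,True),(i+1,True),(i,True)]"
    using cancel_letter[of i n "[(i,False),(i+1,True)]" True] i1 i2 by simp
  finally show ?thesis .
qed

lemma E2: "braid_eq n [(i+1,False),(i,True),(i,True),(i+1,True)] [(i,True),(i+1,True),(i+1,True),(i,False)]"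
proof -
  have "braid_eq n [(i+1,False),(i,True),(i,True),(i+1,True)] [(i+1,False),(i,True),(i+1,True),(i+1,False),(i,True),(i+1,True)]"
    using ins_letter[of "i+1" n "[(i+1,False),(i,True)]" _ True] i1 i2 by simp
  also have "braid_eq n ... [(i,True),(i+1,True),(i,False),(i+1,False),(i,True),(i+1,True)]"
    by (rule rw[OF B2, of _ "[]"]) simp_all
  also have "braid_eq n ... [(i,True),(i+1,True),(i,False),(i,True),(i+1,True),(i,False)]"
    by (rule rw[OF B2, of _ "[(i,True),(i+1,True),(i,False)]" "[]"]) simp_all
  also have "braid_eq n ... [(i,True),(i+1,True),(i+1,True),(i,False)]"
    using cancel_letter[of i n "[(i,True),(i+1,True)]" False] i1 i2 by simp
  finally show ?thesis .
qed

lemma E3: "braid_eq n [(i+1,True),(i,True),(i+1,True),(i+1,True),(i,False),(i+1,False)] [(i,True),(i,True)]"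
proof -
  have "braid_eq n [(i+1,True),(i,True),(i+1,True),(i+1,True),(i,False),(i+1,False)] [(i,True),(i+1,True),(i,True),(i+1,True),(i,False),(i+1,False)]"
    by (rule rw[OF BR'[OF i1 i2], of _ "[]"]) simp_all
  also have "braid_eq n ... [(i,True),(i,True),(i+1,True),(i,True),(i,False),(i+1,False)]"
    by (rule rw[OF BR'[OF i1 i2], of _ "[(i,True)]"]) simp_all
  also have "braid_eq n ... [(i,True),(i,True),(i+1,True),(i+1,False)]"
    using cancel_letter[of i n "[(i,True),(i,True),(i+1,True)]" True] i1 i2 by simp
  also have "braid_eq n ... [(i,True),(i,True)]"
    using cancel_letter[of "i+1" n "[(i,True),(i,True)]" True "[]"] i1 i2 by simp
  finally show ?thesis .
qed

lemma vx: "valid_word n (xw i)" using i2 by (simp add: valid_xw)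

lemma sandwich:
  "braid_eq n ([(i+1,s)] @ xw i @ w @ inv_word (xw i) @ [(i+1,t)])
              (xw i @ ((i+1,s) # w @ [(i+1,t)]) @ inv_word (xw i))"
proof -
  have xc: "braid_eq n ((i+1,s) # xw i) (xw i @ [(i+1,s)])" using xw_comm[of i "i+1" n s] i2 by simp
  have xc2: "braid_eq n ((i+1,\<not>t) # xw i) (xw i @ [(i+1,\<not>t)])" using xw_comm[of i "i+1" n "\<not>t"] i2 by simp
  have xci: "braid_eq n (inv_word (xw i) @ [(i+1,t)]) ([(i+1,t)] @ inv_word (xw i))"
    using be_inv[OF xc2] by simp
  have "[(i+1,s)] @ xw i @ w @ inv_word (xw i) @ [(i+1,t)] = ((i+1,s) # xw i) @ w @ (inv_word (xw i) @ [(i+1,t)])"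
    by simp
  also have "braid_eq n ... ((xw i @ [(i+1,s)]) @ w @ ([(i+1,t)] @ inv_word (xw i)))"
    using be_app[OF xc be_app[OF braid_eq.refl xci]] .
  finally show ?thesis by simp
qed

lemma awi: "a_word i = xw i @ [(i,True),(i,True)] @ inv_word (xw i)" by (simp add: a_word_xw)
lemma awi1: "a_word (Suc i) = xw i @ [(i,True),(i+1,True),(i+1,True),(i,False)] @ inv_word (xw i)"
  using i1 by (simp add: a_word_xw xw_Suc)

lemma conjAp: "braid_eq n ([(i+1,True)] @ a_word i @ [(i+1,False)])
   (inv_word (a_word i) @ a_word (i+1) @ a_word i)"
proof -
  have "[(i+1,True)] @ a_word i @ [(i+1,False)] = [(i+1,True)] @ xw i @ [(i,True),(i,True)] @ inv_word (xw i) @ [(i+1,False)]"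
    by (simp add: awi)
  also have "braid_eq n ... (xw i @ [(i+1,True),(i,True),(i,True),(i+1,False)] @ inv_word (xw i))"
    using sandwich[of True "[(i,True),(i,True)]" False] by simp
  also have "braid_eq n ... (xw i @ [(i,False),(i+1,True),(i+1,True),(i,True)] @ inv_word (xw i))"
    using be_ctx[OF E1] .
  finally have L: "braid_eq n ([(i+1,True)] @ a_word i @ [(i+1,False)]) (xw i @ [(i,False),(i+1,True),(i+1,True),(i,True)] @ inv_word (xw i))" .
  let ?x = "xw i" and ?y = "inv_word (xw i)"
  have s1: "braid_eq n (inv_word (a_word i) @ a_word (i+1) @ a_word i)
     ((?x @ [(i,False),(i,False)]) @ ?y @ ?x @ ([(i,True),(i+1,True),(i+1,True),(i,False)] @ ?y @ ?x @ [(i,True),(i,True)] @ ?y))"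
    by (rule be_eq) (simp add: awi awi1)
  have s2: "braid_eq n ((?x @ [(i,False),(i,False)]) @ ?y @ ?x @ ([(i,True),(i+1,True),(i+1,True),(i,False)] @ ?y @ ?x @ [(i,True),(i,True)] @ ?y))
     ((?x @ [(i,False),(i,False),(i,True),(i+1,True),(i+1,True),(i,False)]) @ ?y @ ?x @ ([(i,True),(i,True)] @ ?y))"
    using cancel_word'[OF vx, of "?x @ [(i,False),(i,False)]" "[(i,True),(i+1,True),(i+1,True),(i,False)] @ ?y @ ?x @ [(i,True),(i,True)] @ ?y"]
    by simp
  have s3: "braid_eq n ((?x @ [(i,False),(i,False),(i,True),(i+1,True),(i+1,True),(i,False)]) @ ?y @ ?x @ ([(i,True),(i,True)] @ ?y))
     ((?x @ [(i,False)]) @ (i,False) # (i, \<not> False) # [(i+1,True),(i+1,True),(i,False),(i,True),(i,True)] @ ?y)"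
    using cancel_word'[OF vx, of "?x @ [(i,False),(i,False),(i,True),(i+1,True),(i+1,True),(i,False)]" "[(i,True),(i,True)] @ ?y"]
    by simp
  have s4: "braid_eq n ((?x @ [(i,False)]) @ (i,False) # (i, \<not> False) # [(i+1,True),(i+1,True),(i,False),(i,True),(i,True)] @ ?y)
     ((?x @ [(i,False),(i+1,True),(i+1,True)]) @ (i,False) # (i, \<not> False) # [(i,True)] @ ?y)"
    using cancel_letter[OF i1, of n "?x @ [(i,False)]" False "[(i+1,True),(i+1,True),(i,False),(i,True),(i,True)] @ ?y"] i2
    by simp
  have s5: "braid_eq n ((?x @ [(i,False),(i+1,True),(i+1,True)]) @ (i,False) # (i, \<not> False) # [(i,True)] @ ?y)
     (?x @ [(i,False),(i+1,True),(i+1,True),(i,True)] @ ?y)"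
    using cancel_letter[OF i1, of n "?x @ [(i,False),(i+1,True),(i+1,True)]" False "[(i,True)] @ ?y"] i2
    by simp
  have R: "braid_eq n (inv_word (a_word i) @ a_word (i+1) @ a_word i) (xw i @ [(i,False),(i+1,True),(i+1,True),(i,True)] @ inv_word (xw i))"
    using braid_eq.trans[OF s1 braid_eq.trans[OF s2 braid_eq.trans[OF s3 braid_eq.trans[OF s4 s5]]]] .
  show ?thesis using L be_sym[OF R] by (rule braid_eq.trans)
qed

lemma conjAm: "braid_eq n ([(i+1,False)] @ a_word i @ [(i+1,True)]) (a_word (i+1))"
proof -
  have "[(i+1,False)] @ a_word i @ [(i+1,True)] = [(i+1,False)] @ xw i @ [(i,True),(i,True)] @ inv_word (xw i) @ [(i+1,True)]"
    by (simp add: awi)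
  also have "braid_eq n ... (xw i @ [(i+1,False),(i,True),(i,True),(i+1,True)] @ inv_word (xw i))"
    using sandwich[of False "[(i,True),(i,True)]" True] by simp
  also have "braid_eq n ... (xw i @ [(i,True),(i+1,True),(i+1,True),(i,False)] @ inv_word (xw i))"
    using be_ctx[OF E2] .
  finally show ?thesis by (simp add: awi1)
qed

lemma conjBp: "braid_eq n ([(i+1,True)] @ a_word (i+1) @ [(i+1,False)]) (a_word i)"
proof -
  have "[(i+1,True)] @ a_word (i+1) @ [(i+1,False)] = [(i+1,True)] @ xw i @ [(i,True),(i+1,True),(i+1,True),(i,False)] @ inv_word (xw i) @ [(i+1,False)]"
    by (simp add: awi1)
  also have "braid_eq n ... (xw i @ [(i+1,True),(i,True),(i+1,True),(i+1,True),(i,False),(i+1,False)] @ inv_word (xw i))"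
    using sandwich[of True "[(i,True),(i+1,True),(i+1,True),(i,False)]" False] by simp
  also have "braid_eq n ... (xw i @ [(i,True),(i,True)] @ inv_word (xw i))"
    using be_ctx[OF E3] .
  finally show ?thesis by (simp add: awi)
qed

lemma va: "valid_word n (a_word i)" "valid_word n (a_word (i+1))"
  using valid_a_word i1 i2 by auto

lemma conjBm: "braid_eq n ([(i+1,False)] @ a_word (i+1) @ [(i+1,True)])
   (a_word (i+1) @ a_word i @ inv_word (a_word (i+1)))"
proof -
  let ?A = "a_word i" and ?B = "a_word (i+1)"
  have c1: "braid_eq n (?A @ inv_word ?A @ ?B @ ?A @ inv_word ?A) (?B @ ?A @ inv_word ?A)"
    using cancel_word[OF va(1), of "[]" "?B @ ?A @ inv_word ?A"] by simp
  have c2: "braid_eq n (?B @ ?A @ inv_word ?A) ?B"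
    using cancel_word[OF va(1), of "?B" "[]"] by simp
  have "braid_eq n ?B (?A @ (inv_word ?A @ ?B @ ?A) @ inv_word ?A)"
    using be_sym[OF braid_eq.trans[OF c1 c2]] by simp
  also have "braid_eq n ... (?A @ ([(i+1,True)] @ ?A @ [(i+1,False)]) @ inv_word ?A)"
    using be_ctx[OF be_sym[OF conjAp]] .
  finally have Bx: "braid_eq n ?B (?A @ ([(i+1,True)] @ ?A @ [(i+1,False)]) @ inv_word ?A)" .
  have inv_am: "braid_eq n ([(i+1,False)] @ inv_word ?A @ [(i+1,True)]) (inv_word ?B)"
    using be_inv[OF conjAm] by simp
  have "braid_eq n ([(i+1,False)] @ ?B @ [(i+1,True)]) ([(i+1,False)] @ (?A @ ([(i+1,True)] @ ?A @ [(i+1,False)]) @ inv_word ?A) @ [(i+1,True)])"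
    using be_ctx[OF Bx] .
  also have "... = ([(i+1,False)] @ ?A @ [(i+1,True)]) @ ?A @ ([(i+1,False)] @ inv_word ?A @ [(i+1,True)])"
    by simp
  also have "braid_eq n ... (?B @ ?A @ inv_word ?B)"
    using be_app[OF conjAm be_app[OF braid_eq.refl inv_am]] .
  finally show ?thesis .
qed

end



lemma comm_through:
  assumes "braid_eq n ([(j,s)] @ x) (x @ [(j',s)])"
    and "braid_eq n [(j',s),(c,True)] [(c,True),(j',s)]"
    and "braid_eq n ([(j',s)] @ y) (y @ [(j,s)])"
  shows "braid_eq n ([(j,s)] @ x @ [(c,True),(c,True)] @ y) (x @ [(c,True),(c,True)] @ y @ [(j,s)])"
proof -
  have 1: "braid_eq n ([(j,s)] @ x @ [(c,True),(c,True)] @ y) (x @ [(j',s),(c,True)] @ [(c,True)] @ y)"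
    using be_right[OF assms(1), of "[(c,True),(c,True)] @ y"] by simp
  have 2: "braid_eq n (x @ [(j',s),(c,True)] @ [(c,True)] @ y) ((x @ [(c,True)]) @ [(j',s),(c,True)] @ y)"
    using be_ctx[OF assms(2), of x "[(c,True)] @ y"] by simp
  have 3: "braid_eq n ((x @ [(c,True)]) @ [(j',s),(c,True)] @ y) ((x @ [(c,True),(c,True)]) @ [(j',s)] @ y)"
    using be_ctx[OF assms(2), of "x @ [(c,True)]" y] by simp
  have 4: "braid_eq n ((x @ [(c,True),(c,True)]) @ [(j',s)] @ y) ((x @ [(c,True),(c,True)]) @ y @ [(j,s)])"
    using be_left[OF assms(3)] .
  show ?thesis using braid_eq.trans[OF 1 braid_eq.trans[OF 2 braid_eq.trans[OF 3 4]]] by simp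
qed

lemma a_comm:
  assumes "1 \<le> c" "c < n" "2 \<le> j" "j < n" "j \<noteq> c" "j \<noteq> c + 1"
  shows "braid_eq n ([(j,s)] @ a_word c) (a_word c @ [(j,s)])"
proof (cases "c + 2 \<le> j")
  case True
  have A: "braid_eq n ([(j,s)] @ xw c) (xw c @ [(j,s)])" using xw_comm[of c j n s] True assms by simp
  have B: "braid_eq n [(j,s),(c,True)] [(c,True),(j,s)]" using far'[of c j n s True] True assms by simp
  have C0: "braid_eq n ((j,\<not>s) # xw c) (xw c @ [(j,\<not>s)])" using xw_comm[of c j n "\<not>s"] True assms by simp
  have C: "braid_eq n ([(j,s)] @ inv_word (xw c)) (inv_word (xw c) @ [(j,s)])"
    using be_sym[OF be_inv[OF C0]] by simp
  show ?thesis using comm_through[OF A B C] by (simp add: a_word_xw)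
next
  case False
  then have jc: "j + 1 \<le> c" using assms by simp
  define i where "i = j - 1"
  have i: "1 \<le> i" "i + 2 \<le> c" "j = i + 1" using assms jc by (auto simp: i_def)
  have A: "braid_eq n ([(j,s)] @ xw c) (xw c @ [(i,s)])" using xw_shift_s[of i c n s] i assms by simp
  have B: "braid_eq n [(i,s),(c,True)] [(c,True),(i,s)]" using far[of i c n s True] i assms by simp
  have C0: "braid_eq n ([(j,\<not>s)] @ xw c) (xw c @ [(i,\<not>s)])" using xw_shift_s[of i c n "\<not>s"] i assms by simp
  have C: "braid_eq n ([(i,s)] @ inv_word (xw c)) (inv_word (xw c) @ [(j,s)])"
    using be_sym[OF be_inv[OF C0]] by simp
  show ?thesis using comm_through[OF A B C] by (simp add: a_word_xw)
qed

lemma a_conj_comm: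
  assumes "1 \<le> c" "c < n" "2 \<le> j" "j < n" "j \<noteq> c" "j \<noteq> c + 1"
  shows "braid_eq n ([(j,s)] @ a_word c @ [(j,\<not>s)]) (a_word c)"
proof -
  have 1: "braid_eq n ([(j,s)] @ a_word c @ [(j,\<not>s)]) (a_word c @ (j,s) # (j,\<not>s) # [])"
    using be_right[OF a_comm[OF assms, of s], of "[(j,\<not>s)]"] by simp
  have 2: "braid_eq n (a_word c @ (j,s) # (j,\<not>s) # []) (a_word c @ [])"
    using cancel_letter[of j n "a_word c" s "[]"] assms by simp
  show ?thesis using braid_eq.trans[OF 1 2] by simp
qed

lemma Nh_sigma:
  assumes j: "2 \<le> j" "j < n"
  shows "Nh n [(j,s)]"
proof (rule NhI)
  show "valid_word n [(j,s)]" using j by simp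
  fix k assume k: "2 \<le> k" "k \<le> n"
  define i where "i = j - 1"
  have i: "1 \<le> i" "i + 1 < n" "j = i + 1" using j by (auto simp: i_def)
  have p: "perm_of [(j,s)] = transpose j (j+1)" by simp
  have inv1: "inv_word [(j,s)] = [(j, \<not> s)]" by simp
  have goal: "\<exists>m. valid_word n m \<and>
           braid_eq n ([(j,s)] @ a_word (k - 1) @ [(j,\<not>s)])
                      (inv_word (Aw m) @ a_word (transpose j (j+1) k - 1) @ Aw m)"
  proof -
    consider "k = j" | "k = j + 1" | "k \<noteq> j" "k \<noteq> j + 1" by blast
    then show ?thesis
    proof cases
      case 1
      then have kk: "k - 1 = i" "transpose j (j+1) k - 1 = i + 1" using i by auto
      show ?thesis
      proof (cases s)
        case True
        then show ?thesis unfolding kk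
          using conjAp[OF i(1,2)] i by (intro exI[of _ "[(i,True)]"]) simp
      next
        case False
        then show ?thesis unfolding kk
          using conjAm[OF i(1,2)] i by (intro exI[of _ "[]"]) simp
      qed
    next
      case 2
      then have kk: "k - 1 = i + 1" "transpose j (j+1) k - 1 = i" using i by auto
      show ?thesis
      proof (cases s)
        case True
        then show ?thesis unfolding kk
          using conjBp[OF i(1,2)] i by (intro exI[of _ "[]"]) simp
      next
        case False
        then show ?thesis unfolding kk
          using conjBm[OF i(1,2)] i by (intro exI[of _ "[(i+1,False)]"]) simp
      qed
    next
      case 3
      then have kk: "transpose j (j+1) k = k" by simp
      have "braid_eq n ([(j,s)] @ a_word (k - 1) @ [(j,\<not>s)]) (a_word (k - 1))"
        using a_conj_comm[of "k-1" n j s] 3 k j by simp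
      then show ?thesis unfolding kk by (intro exI[of _ "[]"]) simp
    qed
  qed
  have "2 \<le> transpose j (j+1) k \<and> transpose j (j+1) k \<le> n"
    using k j by (auto simp: transpose_def)
  then show "2 \<le> perm_of [(j,s)] k \<and> perm_of [(j,s)] k \<le> n \<and>
        (\<exists>m. valid_word n m \<and>
           braid_eq n ([(j,s)] @ a_word (k - 1) @ inv_word [(j,s)])
                      (inv_word (Aw m) @ a_word (perm_of [(j,s)] k - 1) @ Aw m))"
    using goal unfolding p inv1 by simp
qed



lemma coset_step:
  assumes j: "1 \<le> j" "j < n" and p': "1 \<le> p'" "p' \<le> n" and p: "p = transpose j (j+1) p'"
  shows "Nh n (xw p @ [(j,s)] @ inv_word (xw p'))"
proof -
  have vxp: "valid_word n (xw p)" "valid_word n (xw p')"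
    using p p' j valid_xw by (auto simp: transpose_def)
  have vall: "valid_word n (xw p @ [(j,s)] @ inv_word (xw p'))" using vxp j by simp
  consider "p' = j + 1" | "p' = j" | "p' \<noteq> j + 1" "p' \<noteq> j" "j + 1 \<le> p'" | "p' \<noteq> j + 1" "p' \<noteq> j" "p' + 1 \<le> j"
    by linarith
  then show ?thesis
  proof cases
    case 1
    then have pp: "p = j" using p by simp
    have e: "xw p @ [(j,s)] @ inv_word (xw p') = xw j @ [(j,s),(j,False)] @ inv_word (xw j)"
      using 1 pp j by (simp add: xw_Suc)
    show ?thesis
    proof (cases s)
      case True
      have "braid_eq n (xw j @ (j,True) # (j,\<not>True) # inv_word (xw j)) (xw j @ inv_word (xw j))"
        using cancel_letter[of j n "xw j" True "inv_word (xw j)"] j by simp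
      moreover have "braid_eq n (xw j @ inv_word (xw j) @ []) ([] @ [])"
        using cancel_word[of n "xw j" "[]" "[]"] valid_xw[of j n] j by simp
      ultimately have "braid_eq n (xw p @ [(j,s)] @ inv_word (xw p')) []"
        using e True by (simp add: braid_eq.trans)
      then show ?thesis using Nh_transfer[OF Nh_Nil be_sym vall] by blast
    next
      case False
      have "xw p @ [(j,s)] @ inv_word (xw p') = inv_word (a_word j)"
        using e False by (simp add: a_word_xw)
      then show ?thesis using Nh_a_inv[OF j] by simp
    qed
  next
    case 2
    then have pp: "p = j + 1" using p by simp
    have e: "xw p @ [(j,s)] @ inv_word (xw p') = xw j @ [(j,True),(j,s)] @ inv_word (xw j)"
      using 2 pp j by (simp add: xw_Suc)
    show ?thesis
    proof (cases s)
      case True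
      have "xw p @ [(j,s)] @ inv_word (xw p') = a_word j"
        using e True by (simp add: a_word_xw)
      then show ?thesis using Nh_a[OF j] by simp
    next
      case False
      have "braid_eq n (xw j @ (j,True) # (j,\<not>True) # inv_word (xw j)) (xw j @ inv_word (xw j))"
        using cancel_letter[of j n "xw j" True "inv_word (xw j)"] j by simp
      moreover have "braid_eq n (xw j @ inv_word (xw j) @ []) ([] @ [])"
        using cancel_word[of n "xw j" "[]" "[]"] valid_xw[of j n] j by simp
      ultimately have "braid_eq n (xw p @ [(j,s)] @ inv_word (xw p')) []"
        using e False by (simp add: braid_eq.trans)
      then show ?thesis using Nh_transfer[OF Nh_Nil be_sym vall] by blast
    qed
  next
    case 3
    then have pp: "p = p'" using p by (auto simp: transpose_def)
    have jp: "j + 2 \<le> p'" using 3 by simp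
    have A: "braid_eq n ([(j+1,s)] @ xw p') (xw p' @ [(j,s)])" using xw_shift_s[of j p' n s] jp j p' by simp
    have 1: "braid_eq n (xw p @ [(j,s)] @ inv_word (xw p')) ([(j+1,s)] @ xw p' @ inv_word (xw p'))"
      using be_right[OF be_sym[OF A], of "inv_word (xw p')"] pp by simp
    have 2: "braid_eq n ([(j+1,s)] @ xw p' @ inv_word (xw p') @ []) ([(j+1,s)] @ [])"
      using cancel_word[OF vxp(2)] by blast
    have "braid_eq n (xw p @ [(j,s)] @ inv_word (xw p')) [(j+1,s)]"
      using braid_eq.trans[OF 1] 2 by simp
    moreover have "Nh n [(j+1,s)]" using Nh_sigma[of "j+1" n s] jp j p' by simp
    ultimately show ?thesis using Nh_transfer be_sym vall by blast
  next
    case 4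
    then have pp: "p = p'" using p by (auto simp: transpose_def)
    have A: "braid_eq n ((j,s) # xw p') (xw p' @ [(j,s)])" using xw_comm[of p' j n s] 4 j by simp
    have 1: "braid_eq n (xw p @ [(j,s)] @ inv_word (xw p')) ([(j,s)] @ xw p' @ inv_word (xw p'))"
      using be_right[OF be_sym[OF A], of "inv_word (xw p')"] pp by simp
    have 2: "braid_eq n ([(j,s)] @ xw p' @ inv_word (xw p') @ []) ([(j,s)] @ [])"
      using cancel_word[OF vxp(2)] by blast
    have "braid_eq n (xw p @ [(j,s)] @ inv_word (xw p')) [(j,s)]"
      using braid_eq.trans[OF 1] 2 by simp
    moreover have "Nh n [(j,s)]" using Nh_sigma[of j n s] 4 j p' by simp
    ultimately show ?thesis using Nh_transfer be_sym vall by blast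
  qed
qed

lemma main_ind:
  assumes "1 \<le> n"
  shows "valid_word n u \<Longrightarrow> 1 \<le> perm_of u 1 \<and> perm_of u 1 \<le> n \<and> Nh n (xw (perm_of u 1) @ u)"
proof (induction u)
  case Nil then show ?case using assms Nh_Nil by simp
next
  case (Cons x u)
  obtain j s where x: "x = (j,s)" by (cases x)
  have j: "1 \<le> j" "j < n" using Cons.prems x by auto
  have vu: "valid_word n u" using Cons.prems by simp
  define p' where "p' = perm_of u 1"
  define p where "p = perm_of (x # u) 1"
  have pp: "p = transpose j (j+1) p'" by (simp add: p_def p'_def x)
  have IH: "1 \<le> p'" "p' \<le> n" "Nh n (xw p' @ u)" using Cons.IH[OF vu] by (auto simp: p'_def)
  have pr: "1 \<le> p" "p \<le> n" using perm_range[OF Cons.prems, of 1] assms by (auto simp: p_def)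
  have N1: "Nh n (xw p @ [(j,s)] @ inv_word (xw p'))" using coset_step[OF j IH(1,2) pp] .
  have N2: "Nh n ((xw p @ [(j,s)] @ inv_word (xw p')) @ (xw p' @ u))" using Nh_mult[OF N1 IH(3)] .
  have e: "braid_eq n ((xw p @ [(j,s)]) @ inv_word (xw p') @ xw p' @ u) ((xw p @ [(j,s)]) @ u)"
    using cancel_word'[OF valid_xw[OF IH(2)]] .
  have v: "valid_word n (xw p @ x # u)" using valid_xw[OF pr(2)] Cons.prems by simp
  have "Nh n (xw p @ x # u)" using Nh_transfer[OF N2 _ v] e x by simp
  then show ?case using pr by (simp add: p_def)
qed



lemma a_word_1: "a_word (Suc 0) = [(1,True),(1,True)]" by (simp add: a_word_def)

theorem lemma3p5:
  fixes n :: nat and b :: bword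
  assumes "n \<ge> 2"
    and "half_twist n b"
    and "perm_of b = transpose 1 n"
  shows "in_A n (b @ b) \<and>
         (\<exists>P. valid_word n P \<and> in_A n P \<and>
              braid_eq n (b @ b) (inv_word P @ a_word (n - 1) @ P))"
proof -
  obtain u where vu: "valid_word n u" and bu: "braid_eq n b (u @ [(1, True)] @ inv_word u)"
    using assms(2) unfolding half_twist_def by blast
  define g where "g = perm_of u"
  define gi where "gi = perm_of (inv_word u)"
  have gig: "\<And>x. gi (g x) = x" using perm_inv_left[of u] unfolding g_def gi_def by (simp add: fun_eq_iff)
  have pb: "perm_of b = g \<circ> transpose 1 2 \<circ> gi"
    using perm_be[OF bu] unfolding g_def gi_def by (simp add: comp_assoc numeral_2_eq_2)
  have t1: "transpose 1 n (g 1) = g 2" using pb assms(3) gig by (metis comp_apply transpose_apply_first numeral_2_eq_2 One_nat_def)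
  have t2: "transpose 1 n (g 2) = g 1" using pb assms(3) gig by (metis comp_apply transpose_apply_second)
  have ne: "g 1 \<noteq> g 2" using gig by (metis numeral_2_eq_2 n_not_Suc_n One_nat_def)
  have cases: "(g 1 = 1 \<and> g 2 = n) \<or> (g 1 = n \<and> g 2 = 1)"
    using t1 t2 ne by (auto simp: transpose_def split: if_splits)
  have bb: "braid_eq n (b @ b) (u @ [(1,True),(1,True)] @ inv_word u)"
  proof -
    have "braid_eq n (b @ b) ((u @ [(1, True)] @ inv_word u) @ (u @ [(1, True)] @ inv_word u))"
      using be_app[OF bu bu] .
    moreover have "braid_eq n ((u @ [(1, True)]) @ inv_word u @ u @ ([(1, True)] @ inv_word u))
                               ((u @ [(1, True)]) @ ([(1, True)] @ inv_word u))"
      using cancel_word'[OF vu] .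
    ultimately show ?thesis by (simp add: braid_eq.trans)
  qed
  obtain u' where vu': "valid_word n u'" and g1: "perm_of u' 1 = 1" and g2: "perm_of u' 2 = n"
    and bb': "braid_eq n (b @ b) (u' @ a_word 1 @ inv_word u')"
  proof (cases "g 1 = 1")
    case True
    then show ?thesis using that[of u] cases vu bb assms(1) by (simp add: g_def a_word_1)
  next
    case False
    then have gg: "g 1 = n" "g 2 = 1" using cases by auto
    have e: "braid_eq n ((u @ [(1,True),(1,True)]) @ (1,True) # (1, \<not> True) # inv_word u) ((u @ [(1,True),(1,True)]) @ inv_word u)"
      using cancel_letter[of 1 n "u @ [(1,True),(1,True)]" True "inv_word u"] assms(1) by simp
    have "braid_eq n (b @ b) ((u @ [(1,True)]) @ a_word 1 @ inv_word (u @ [(1,True)]))"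
      using braid_eq.trans[OF bb be_sym[OF e[unfolded append_assoc]]] by (simp add: a_word_1)
    moreover have "perm_of (u @ [(1,True)]) 1 = 1" "perm_of (u @ [(1,True)]) 2 = n"
      using gg by (simp_all add: g_def numeral_2_eq_2)
    moreover have "valid_word n (u @ [(1,True)])" using vu assms(1) by simp
    ultimately show ?thesis using that by blast
  qed
  have N: "Nh n u'" using main_ind[of n u'] vu' g1 assms(1) by simp
  obtain m where vm: "valid_word n m"
    and mm: "braid_eq n (u' @ a_word (2 - 1) @ inv_word u') (inv_word (Aw m) @ a_word (perm_of u' 2 - 1) @ Aw m)"
    using NhD(3)[OF N _ assms(1)] by auto
  have conj: "braid_eq n (b @ b) (inv_word (Aw m) @ a_word (n - 1) @ Aw m)"
    using braid_eq.trans[OF bb'] mm g2 by simp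
  define ls where "ls = inv_word m @ [(n - 1, True)] @ m"
  have vls: "valid_word n ls" using vm assms(1) by (simp add: ls_def)
  have "concat (map a_letter ls) = inv_word (Aw m) @ a_word (n - 1) @ Aw m"
    using conj_A_form[of m "n - 1"] by (simp add: ls_def Aw_def)
  then have A1: "in_A n (b @ b)"
    unfolding in_A_def using vls conj by (auto simp: valid_word_def)
  have A2: "in_A n (Aw m)"
    unfolding in_A_def using vm by (auto simp: valid_word_def Aw_def intro: braid_eq.refl)
  show ?thesis using A1 A2 conj valid_Aw[OF vm] by blast
qed


end
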